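(* Let $M$ be a $3$-connected matroid, let $\mathcal{T}$ be a tangle of $M$, and let $C,D$ be disjoint subsets of $E(M)$ such that $C\cup D$ is independent in the tangle matroid $M(\mathcal{T})$ and $M/C\setminus D$ is $3$-connected. Let $G=R(M,C,D)$ and let $S\subseteq C\cup D$. Then the matroid $M/(C\setminus S)\setminus(D\setminus S)$ is $3$-connected if and only if the induced subgraph $G[S]$ has no isolated non-privileged vertices.
   Context: $\lambda_M(X) = \rank_M(X) + \rank_M(E(M)\setminus X) - \rank(M)$. A tangle of order $\theta$ of $M$ is a collection $\mathcal{T}$ of subsets of $E(M)$ such that: (i) $\lambda_M(X)<\theta$ for all $X\in\mathcal{T}$; (ii) for every $X\subseteq E(M)$ with $\lambda_M(X)<\theta$, either $X\in\mathcal{T}$ or $E(M)\setminus X\in\mathcal{T}$; (iii) if $X,Y,Z\in\mathcal{T}$ then $X\cup Y\cup Z\neq E(M)$; (iv) $E(M)\setminus\{e\}\notin\mathcal{T}$ for every $e\in E(M)$. The tangle matroid $M(\mathcal{T})$ has rank function $\rank_{\mathcal{T}}(X) = \min\{\lambda_M(Y): X\subseteq Y\in\mathcal{T}\}$ if some member of $\mathcal{T}$ contains $X$, and $\theta$ otherwise. For $M$ 3-connected and disjoint $C,D\subseteq E(M)$ with $M/C\setminus D$ 3-connected, the restoration graph $R(M,C,D)$ is the bipartite graph with vertex set $C\cup D$ and an edge $cd$ (for $c\in C$, $d\in D$) exactly when $M/(C\setminus c)\setminus(D\setminus d)$ is 3-connected. An element $e\in C\cup D$ is privileged if $M/(C\setminus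 e)\setminus(D\setminus e)$ is 3-connected. $G[S]$ denotes the subgraph induced on $S$. *)

theory Defs
  imports Main
begin

text \<open>A matroid is represented by a finite ground set E and a rank function r
satisfying the rank axioms (on subsets of E).\<close>

definition matroid_rank :: "'a set \<Rightarrow> ('a set \<Rightarrow> nat) \<Rightarrow> bool" where
  "matroid_rank E r \<longleftrightarrow> finite E
     \<and> (\<forall>X. X \<subseteq> E \<longrightarrow> r X \<le> card X)
     \<and> (\<forall>X Y. X \<subseteq> Y \<and> Y \<subseteq> E \<longrightarrow> r X \<le> r Y)
     \<and> (\<forall>X Y. X \<subseteq> E \<and> Y \<subseteq> E \<longrightarrow> r (X \<union> Y) + r (X \<inter> Y) \<le> r X + r Y)"

definition conn_fun :: "'a set \<Rightarrow> ('a set \<Rightarrow> nat) \<Rightarrow> 'a set \<Rightarrow> nat" where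
  "conn_fun E r X = r X + r (E - X) - r E"

text \<open>3-connected (Tutte): no 1-separation and no 2-separation. A k-separation is a
partition (A, E - A) with |A|, |E - A| >= k and r(A) + r(E-A) - r(M) <= k - 1.\<close>

definition three_connected :: "'a set \<Rightarrow> ('a set \<Rightarrow> nat) \<Rightarrow> bool" where
  "three_connected E r \<longleftrightarrow>
     (\<forall>A. A \<subseteq> E \<longrightarrow>
        (card A \<ge> 1 \<and> card (E - A) \<ge> 1 \<longrightarrow> conn_fun E r A \<ge> 1)
      \<and> (card A \<ge> 2 \<and> card (E - A) \<ge> 2 \<longrightarrow> conn_fun E r A \<ge> 2))"

text \<open>The minor M/C\D has ground set E - (C \<union> D) and rank function
X \<mapsto> r(X \<union> C) - r(C).\<close>

definition minor_ground :: "'a set \<Rightarrow> 'a set \<Rightarrow> 'a set \<Rightarrow> 'a set" where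
  "minor_ground E C D = E - (C \<union> D)"

definition minor_rank :: "('a set \<Rightarrow> nat) \<Rightarrow> 'a set \<Rightarrow> 'a set \<Rightarrow> nat" where
  "minor_rank r C X = r (X \<union> C) - r C"

definition minor_3conn :: "'a set \<Rightarrow> ('a set \<Rightarrow> nat) \<Rightarrow> 'a set \<Rightarrow> 'a set \<Rightarrow> bool" where
  "minor_3conn E r C D \<longleftrightarrow> three_connected (minor_ground E C D) (minor_rank r C)"

definition is_tangle :: "'a set \<Rightarrow> ('a set \<Rightarrow> nat) \<Rightarrow> nat \<Rightarrow> 'a set set \<Rightarrow> bool" where
  "is_tangle E r \<theta> T \<longleftrightarrow>
     T \<subseteq> Pow E
   \<and> (\<forall>X\<in>T. conn_fun E r X < \<theta>)
   \<and> (\<forall>X. X \<subseteq> E \<and> conn_fun E r X < \<theta> \<longrightarrow> X \<in> T \<or> E - X \<in> T)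
   \<and> (\<forall>X\<in>T. \<forall>Y\<in>T. \<forall>Z\<in>T. X \<union> Y \<union> Z \<noteq> E)
   \<and> (\<forall>e\<in>E. E - {e} \<notin> T)"

definition tangle_rank :: "'a set \<Rightarrow> ('a set \<Rightarrow> nat) \<Rightarrow> nat \<Rightarrow> 'a set set \<Rightarrow> 'a set \<Rightarrow> nat" where
  "tangle_rank E r \<theta> T X =
     (if \<exists>Y\<in>T. X \<subseteq> Y then Min {conn_fun E r Y | Y. Y \<in> T \<and> X \<subseteq> Y} else \<theta>)"

definition tangle_indep :: "'a set \<Rightarrow> ('a set \<Rightarrow> nat) \<Rightarrow> nat \<Rightarrow> 'a set set \<Rightarrow> 'a set \<Rightarrow> bool" where
  "tangle_indep E r \<theta> T X \<longleftrightarrow> X \<subseteq> E \<and> tangle_rank E r \<theta> T X = card X"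

definition restoration_adj :: "'a set \<Rightarrow> ('a set \<Rightarrow> nat) \<Rightarrow> 'a set \<Rightarrow> 'a set \<Rightarrow> 'a \<Rightarrow> 'a \<Rightarrow> bool" where
  "restoration_adj E r C D x y \<longleftrightarrow>
     (x \<in> C \<and> y \<in> D \<and> minor_3conn E r (C - {x}) (D - {y}))
   \<or> (y \<in> C \<and> x \<in> D \<and> minor_3conn E r (C - {y}) (D - {x}))"

definition privileged :: "'a set \<Rightarrow> ('a set \<Rightarrow> nat) \<Rightarrow> 'a set \<Rightarrow> 'a set \<Rightarrow> 'a \<Rightarrow> bool" where
  "privileged E r C D e \<longleftrightarrow> e \<in> C \<union> D \<and> minor_3conn E r (C - {e}) (D - {e})"

definition no_isolated_nonpriv :: "'a set \<Rightarrow> ('a set \<Rightarrow> nat) \<Rightarrow> 'a set \<Rightarrow> 'a set \<Rightarrow> 'a set \<Rightarrow> bool" where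
  "no_isolated_nonpriv E r C D S \<longleftrightarrow>
     (\<forall>v\<in>S. \<not> privileged E r C D v \<longrightarrow> (\<exists>u\<in>S. restoration_adj E r C D v u))"

end

theory Submission
  imports Defs
begin


definition lam :: "'a set \<Rightarrow> ('a set \<Rightarrow> nat) \<Rightarrow> 'a set \<Rightarrow> 'a set \<Rightarrow> 'a set \<Rightarrow> int" where
  "lam E r A B X = int (r (X \<union> A)) + int (r (E - B - X)) - int (r A) - int (r (E - B))"

locale mr =
  fixes E :: "'a set" and r :: "'a set \<Rightarrow> nat"
  assumes M: "matroid_rank E r"
begin

lemma finE: "finite E" using M unfolding matroid_rank_def by blast
lemma rle: "X \<subseteq> E \<Longrightarrow> r X \<le> card X" using M unfolding matroid_rank_def by blast
lemma mono: "X \<subseteq> Y \<Longrightarrow> Y \<subseteq> E \<Longrightarrow> r X \<le> r Y" using M unfolding matroid_rank_def by blast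
lemma sub: "X \<subseteq> E \<Longrightarrow> Y \<subseteq> E \<Longrightarrow> r (X \<union> Y) + r (X \<inter> Y) \<le> r X + r Y"
  using M unfolding matroid_rank_def by blast
lemma r_empty: "r {} = 0" using rle[of "{}"] by simp
lemma r_single: "e \<in> E \<Longrightarrow> r {e} \<le> 1" using rle[of "{e}"] by simp
lemma r_insert: "X \<subseteq> E \<Longrightarrow> e \<in> E \<Longrightarrow> r (insert e X) \<le> r X + 1"
proof -
  assume a: "X \<subseteq> E" "e \<in> E"
  have "r (X \<union> {e}) + r (X \<inter> {e}) \<le> r X + r {e}" using sub[of X "{e}"] a by auto
  thus ?thesis using r_single[OF a(2)] by simp
qed
lemma r_union_card: "X \<subseteq> E \<Longrightarrow> Y \<subseteq> E \<Longrightarrow> r (X \<union> Y) \<le> r X + card Y"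
proof -
  assume a: "X \<subseteq> E" "Y \<subseteq> E"
  have "finite Y" using a finE finite_subset by blast
  thus ?thesis using a(2)
  proof (induction Y)
    case empty then show ?case by simp
  next
    case (insert e Y)
    have "r (X \<union> insert e Y) = r (insert e (X \<union> Y))" by simp
    also have "\<dots> \<le> r (X \<union> Y) + 1" using r_insert insert a by auto
    finally show ?case using insert by simp
  qed
qed
lemma cl_mono: "Y \<subseteq> H \<Longrightarrow> H \<subseteq> E \<Longrightarrow> u \<in> E \<Longrightarrow> r (insert u Y) = r Y \<Longrightarrow> r (insert u H) = r H"
proof -
  assume a: "Y \<subseteq> H" "H \<subseteq> E" "u \<in> E" "r (insert u Y) = r Y"
  show ?thesis
  proof (cases "u \<in> H")
    case True then show ?thesis by (simp add: insert_absorb)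
  next
    case False
    have "H \<union> insert u Y = insert u H" "H \<inter> insert u Y = Y" using a False by auto
    moreover have "r (H \<union> insert u Y) + r (H \<inter> insert u Y) \<le> r H + r (insert u Y)"
      using sub[of H "insert u Y"] a by auto
    moreover have "r H \<le> r (insert u H)" using mono[of H "insert u H"] a by auto
    ultimately show ?thesis using a by simp
  qed
qed
lemma cl_union: "U \<subseteq> E \<Longrightarrow> H \<subseteq> E \<Longrightarrow> (\<And>u. u \<in> U \<Longrightarrow> r (insert u H) = r H) \<Longrightarrow> r (H \<union> U) = r H"
proof -
  assume a: "U \<subseteq> E" "H \<subseteq> E" "\<And>u. u \<in> U \<Longrightarrow> r (insert u H) = r H"
  have "finite U" using a finE finite_subset by blast
  thus ?thesis using a(1,3)
  proof (induction U)
    case empty then show ?case by simp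
  next
    case (insert e U)
    have "r (insert e (H \<union> U)) = r (H \<union> U)"
      using cl_mono[of H "H \<union> U" e] insert a by auto
    thus ?case using insert by simp
  qed
qed

lemma lam_nonneg: "A \<subseteq> E - B \<Longrightarrow> X \<subseteq> E - B \<Longrightarrow> A \<inter> X = {} \<Longrightarrow> lam E r A B X \<ge> 0"
proof -
  assume a: "A \<subseteq> E - B" "X \<subseteq> E - B" "A \<inter> X = {}"
  have "(X \<union> A) \<union> (E - B - X) = E - B" "(X \<union> A) \<inter> (E - B - X) = A" using a by auto
  moreover have "r ((X \<union> A) \<union> (E - B - X)) + r ((X \<union> A) \<inter> (E - B - X)) \<le> r (X \<union> A) + r (E - B - X)"
    using sub[of "X \<union> A" "E - B - X"] a by auto
  ultimately show ?thesis unfolding lam_def by simp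
qed

lemma conn_eq:
  assumes "A \<subseteq> E" "B \<subseteq> E" "A \<inter> B = {}" "X \<subseteq> E - (A \<union> B)"
  shows "int (conn_fun (E - (A \<union> B)) (minor_rank r A) X) = lam E r A B X"
proof -
  let ?G = "E - (A \<union> B)"
  have e1: "(?G - X) \<union> A = E - B - X" "?G \<union> A = E - B" using assms by auto
  have m1: "r A \<le> r (X \<union> A)" "r A \<le> r (E - B - X)" "r A \<le> r (E - B)"
    using mono[of A "X \<union> A"] mono[of A "E - B - X"] mono[of A "E - B"] assms by auto
  have nn: "lam E r A B X \<ge> 0" using lam_nonneg[of A B X] assms by auto
  show ?thesis unfolding conn_fun_def minor_rank_def e1 using m1 nn unfolding lam_def
    by (simp add: of_nat_diff)
qed

lemma m3_iff:
  assumes "A \<subseteq> E" "B \<subseteq> E" "A \<inter> B = {}"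
  shows "minor_3conn E r A B \<longleftrightarrow> (\<forall>X. X \<subseteq> E - (A \<union> B) \<longrightarrow>
     (card X \<ge> 1 \<and> card (E - (A \<union> B) - X) \<ge> 1 \<longrightarrow> lam E r A B X \<ge> 1) \<and>
     (card X \<ge> 2 \<and> card (E - (A \<union> B) - X) \<ge> 2 \<longrightarrow> lam E r A B X \<ge> 2))"
  unfolding minor_3conn_def three_connected_def minor_ground_def
  using conn_eq[OF assms] by (smt (verit) of_nat_1 of_nat_le_iff one_add_one of_nat_add)

lemma lam_compl:
  assumes "A \<subseteq> E" "B \<subseteq> E" "A \<inter> B = {}" "X \<subseteq> E - (A \<union> B)"
  shows "lam E r A B (E - (A \<union> B) - X) = lam E r A B X"
proof -
  have "(E - (A \<union> B) - X) \<union> A = E - B - X" "E - B - (E - (A \<union> B) - X) = X \<union> A" using assms by auto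
  thus ?thesis unfolding lam_def by simp
qed

end

context mr begin

lemma stepD:
  assumes "A \<subseteq> E" "B \<subseteq> E" "A \<inter> B = {}" "e \<in> E - (A \<union> B)" "X \<subseteq> E - (A \<union> B)"
  shows "lam E r A (insert e B) (X - {e}) \<le> lam E r A B X \<and> lam E r A B X \<le> lam E r A (insert e B) (X - {e}) + 1"
proof (cases "e \<in> X")
  case True
  have s1: "E - insert e B - (X - {e}) = E - B - X" using True by auto
  have u: "(X \<union> A) \<union> (E - B - {e}) = E - B" "(X \<union> A) \<inter> (E - B - {e}) = (X - {e}) \<union> A"
    using assms True by auto
  have "r ((X \<union> A) \<union> (E - B - {e})) + r ((X \<union> A) \<inter> (E - B - {e})) \<le> r (X \<union> A) + r (E - B - {e})"
    using sub[of "X \<union> A" "E - B - {e}"] assms by auto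
  hence a1: "r (E - B) + r ((X - {e}) \<union> A) \<le> r (X \<union> A) + r (E - B - {e})" using u by simp
  have "X \<union> A = insert e ((X - {e}) \<union> A)" using True by auto
  moreover have "(X - {e}) \<union> A \<subseteq> E" using assms by auto
  ultimately have a2: "r (X \<union> A) \<le> r ((X - {e}) \<union> A) + 1" using r_insert[of "(X - {e}) \<union> A" e] assms by simp
  have a3: "r (E - B - {e}) \<le> r (E - B)" using mono[of "E - B - {e}" "E - B"] by auto
  have "E - insert e B = E - B - {e}" by auto
  then show ?thesis unfolding lam_def s1 using a1 a2 a3 by simp
next
  case False
  have s1: "E - insert e B - (X - {e}) = E - B - X - {e}" "X - {e} = X" using False by auto
  have u: "(E - B - X) \<union> (E - B - {e}) = E - B" "(E - B - X) \<inter> (E - B - {e}) = E - B - X - {e}"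
    using assms False by auto
  have "r ((E - B - X) \<union> (E - B - {e})) + r ((E - B - X) \<inter> (E - B - {e})) \<le> r (E - B - X) + r (E - B - {e})"
    using sub[of "E - B - X" "E - B - {e}"] assms by auto
  hence a1: "r (E - B) + r (E - B - X - {e}) \<le> r (E - B - X) + r (E - B - {e})" using u by simp
  have "E - B - X = insert e (E - B - X - {e})" using False assms by auto
  hence a2: "r (E - B - X) \<le> r (E - B - X - {e}) + 1" using r_insert[of "E - B - X - {e}" e] assms by auto
  have a3: "r (E - B - {e}) \<le> r (E - B)" using mono[of "E - B - {e}" "E - B"] by auto
  have "E - insert e B = E - B - {e}" "E - B - {e} - X = E - B - X - {e}" by auto
  then show ?thesis unfolding lam_def s1 using a1 a2 a3 by simp
qed

lemma stepC:
  assumes "A \<subseteq> E" "B \<subseteq> E" "A \<inter> B = {}" "e \<in> E - (A \<union> B)" "X \<subseteq> E - (A \<union> B)"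
  shows "lam E r (insert e A) B (X - {e}) \<le> lam E r A B X \<and> lam E r A B X \<le> lam E r (insert e A) B (X - {e}) + 1"
proof (cases "e \<in> X")
  case True
  have s1: "X - {e} \<union> insert e A = X \<union> A" "E - B - (X - {e}) = insert e (E - B - X)" using True assms by auto
  have u: "(insert e A) \<union> (E - B - X) = insert e (E - B - X)" "(insert e A) \<inter> (E - B - X) = A"
    using assms True by auto
  have "r ((insert e A) \<union> (E - B - X)) + r ((insert e A) \<inter> (E - B - X)) \<le> r (insert e A) + r (E - B - X)"
    using sub[of "insert e A" "E - B - X"] assms by auto
  hence a1: "r (insert e (E - B - X)) + r A \<le> r (insert e A) + r (E - B - X)" using u by simp
  have a2: "r (insert e A) \<le> r A + 1" using r_insert[of A e] assms by auto
  have a3: "r (E - B - X) \<le> r (insert e (E - B - X))" using mono[of "E - B - X" "insert e (E - B - X)"] assms by auto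
  show ?thesis unfolding lam_def s1 using a1 a2 a3 by simp
next
  case False
  have s1: "X - {e} \<union> insert e A = insert e (X \<union> A)" "X - {e} = X" using False by auto
  have u: "(X \<union> A) \<union> (insert e A) = insert e (X \<union> A)" "(X \<union> A) \<inter> (insert e A) = A"
    using assms False by auto
  have "r ((X \<union> A) \<union> (insert e A)) + r ((X \<union> A) \<inter> (insert e A)) \<le> r (X \<union> A) + r (insert e A)"
    using sub[of "X \<union> A" "insert e A"] assms by auto
  hence a1: "r (insert e (X \<union> A)) + r A \<le> r (X \<union> A) + r (insert e A)" using u by simp
  have a2: "r (insert e A) \<le> r A + 1" using r_insert[of A e] assms by auto
  have a3: "r (X \<union> A) \<le> r (insert e (X \<union> A))" using mono[of "X \<union> A" "insert e (X \<union> A)"] assms by auto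
  show ?thesis unfolding lam_def s1 using a1 a2 a3 by simp
qed

end


locale stp = mr +
  fixes \<theta> :: nat and T :: "'a set set" and C D :: "'a set"
  assumes conn3: "three_connected E r"
    and tang: "is_tangle E r \<theta> T"
    and CE: "C \<subseteq> E" and DE: "D \<subseteq> E" and CD: "C \<inter> D = {}"
    and ind: "tangle_indep E r \<theta> T (C \<union> D)"
    and N3: "minor_3conn E r C D"
begin

abbreviation "Z \<equiv> C \<union> D"
abbreviation "F \<equiv> E - (C \<union> D)"
abbreviation "lamT S X \<equiv> lam E r (C - S) (D - S) X"
abbreviation "lamM X \<equiv> lam E r {} {} X"

lemma ground_eq: "S \<subseteq> Z \<Longrightarrow> E - ((C - S) \<union> (D - S)) = F \<union> S"
  using CE DE by auto

lemma mono_set: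
  assumes S: "S \<subseteq> Z" and R: "R \<subseteq> S" and X: "X \<subseteq> F \<union> S"
  shows "lamT (S - R) (X - R) \<le> lamT S X \<and> lamT S X \<le> lamT (S - R) (X - R) + int (card R)"
proof -
  have "finite R" using R S CE DE finE finite_subset by (meson le_sup_iff subset_trans)
  thus ?thesis using R
  proof (induction R)
    case empty then show ?case by simp
  next
    case (insert e R)
    let ?S = "S - R" let ?A = "C - ?S" let ?B = "D - ?S" let ?X = "X - R"
    have IH: "lamT ?S ?X \<le> lamT S X \<and> lamT S X \<le> lamT ?S ?X + int (card R)" using insert by auto
    have eS: "e \<in> ?S" using insert by auto
    have hyp: "?A \<subseteq> E" "?B \<subseteq> E" "?A \<inter> ?B = {}" "e \<in> E - (?A \<union> ?B)" "?X \<subseteq> E - (?A \<union> ?B)"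
      using CE DE CD eS X S insert by auto
    have x1: "S - insert e R = ?S - {e}" "X - insert e R = ?X - {e}" by auto
    have step: "lamT (?S - {e}) (?X - {e}) \<le> lamT ?S ?X \<and> lamT ?S ?X \<le> lamT (?S - {e}) (?X - {e}) + 1"
    proof (cases "e \<in> C")
      case True
      have "C - (?S - {e}) = insert e ?A" "D - (?S - {e}) = ?B" using True CD by auto
      then show ?thesis using stepC[OF hyp] by simp
    next
      case False
      hence "e \<in> D" using eS S by auto
      hence "C - (?S - {e}) = ?A" "D - (?S - {e}) = insert e ?B" using False by auto
      then show ?thesis using stepD[OF hyp] by simp
    qed
    have "card (insert e R) = card R + 1" using insert by simp
    then show ?case unfolding x1 using IH step by linarith
  qed
qed

lemma conn_lamM: "X \<subseteq> E \<Longrightarrow> int (conn_fun E r X) = lamM X"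
  using conn_eq[of "{}" "{}" X] unfolding minor_rank_def by (simp add: r_empty)

lemma lamM_eq: "lamM X = int (r X) + int (r (E - X)) - int (r E)"
  unfolding lam_def by (simp add: r_empty)

lemma conn_le_card: "X \<subseteq> E \<Longrightarrow> conn_fun E r X \<le> card X"
  unfolding conn_fun_def using rle[of X] mono[of "E - X" E] by auto

lemma tangD: "T \<subseteq> Pow E
   \<and> (\<forall>X\<in>T. conn_fun E r X < \<theta>)
   \<and> (\<forall>X. X \<subseteq> E \<and> conn_fun E r X < \<theta> \<longrightarrow> X \<in> T \<or> E - X \<in> T)
   \<and> (\<forall>X\<in>T. \<forall>Y\<in>T. \<forall>Z\<in>T. X \<union> Y \<union> Z \<noteq> E)
   \<and> (\<forall>e\<in>E. E - {e} \<notin> T)" using tang unfolding is_tangle_def .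
lemma T_sub: "Y \<in> T \<Longrightarrow> Y \<subseteq> E" using tangD[THEN conjunct1] by auto
lemma T_lt: "Y \<in> T \<Longrightarrow> conn_fun E r Y < \<theta>" using tangD[THEN conjunct2, THEN conjunct1] by simp
lemma T_or: "X \<subseteq> E \<Longrightarrow> conn_fun E r X < \<theta> \<Longrightarrow> X \<in> T \<or> E - X \<in> T"
  using tangD[THEN conjunct2, THEN conjunct2, THEN conjunct1] by simp
lemma T_cover: "X \<in> T \<Longrightarrow> Y \<in> T \<Longrightarrow> W \<in> T \<Longrightarrow> X \<union> Y \<union> W \<noteq> E"
  using tangD[THEN conjunct2, THEN conjunct2, THEN conjunct2, THEN conjunct1] by simp
lemma T_nosing: "e \<in> E \<Longrightarrow> E - {e} \<notin> T"
  using tangD[THEN conjunct2, THEN conjunct2, THEN conjunct2, THEN conjunct2] by simp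

lemma T_small: "U \<subseteq> E \<Longrightarrow> card U < \<theta> \<Longrightarrow> U \<in> T"
proof -
  assume a: "U \<subseteq> E" "card U < \<theta>"
  have "finite U" using a finE finite_subset by blast
  thus ?thesis using a
  proof (induction U)
    case empty
    have "conn_fun E r {} < \<theta>" using empty conn_le_card[of "{}"] by simp
    hence "{} \<in> T \<or> E - {} \<in> T" using T_or[of "{}"] by simp
    moreover have "E \<notin> T" using T_cover[of E E E] by auto
    ultimately show ?case by simp
  next
    case (insert e U)
    have U: "U \<in> T" using insert by simp
    have "1 < \<theta>" using insert by simp
    moreover have "conn_fun E r {e} \<le> 1" using conn_le_card[of "{e}"] insert by simp
    ultimately have "conn_fun E r {e} < \<theta>" by simp
    hence "{e} \<in> T" using T_or[of "{e}"] T_nosing[of e] insert by auto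
    moreover have "conn_fun E r (insert e U) < \<theta>" using conn_le_card[of "insert e U"] insert by simp
    ultimately show ?case using T_or[of "insert e U"] T_cover[of U "{e}" "E - insert e U"] U insert by auto
  qed
qed

lemma ZE: "Z \<subseteq> E" using CE DE by auto
lemma finZ: "finite Z" using ZE finE finite_subset by blast
lemma finF: "finite F" using finE by simp

lemma T_indep: "Z \<subseteq> Y \<Longrightarrow> Y \<in> T \<Longrightarrow> card Z \<le> conn_fun E r Y"
proof -
  assume a: "Z \<subseteq> Y" "Y \<in> T"
  have fin: "finite {conn_fun E r Y | Y. Y \<in> T \<and> Z \<subseteq> Y}"
  proof -
    have "T \<subseteq> Pow E" using T_sub by auto
    hence "finite T" using finE by (meson finite_Pow_iff finite_subset)
    thus ?thesis by simp
  qed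
  have "tangle_rank E r \<theta> T Z = Min {conn_fun E r Y | Y. Y \<in> T \<and> Z \<subseteq> Y}"
    unfolding tangle_rank_def using a by auto
  also have "\<dots> \<le> conn_fun E r Y" using fin a by (intro Min_le) auto
  finally show ?thesis using ind unfolding tangle_indep_def by simp
qed

lemma Z_le_theta: "card Z \<le> \<theta>"
proof (cases "\<exists>Y\<in>T. Z \<subseteq> Y")
  case True
  then obtain Y where "Y \<in> T" "Z \<subseteq> Y" by blast
  thus ?thesis using T_indep T_lt by (meson le_trans less_imp_le)
next
  case False
  hence "tangle_rank E r \<theta> T Z = \<theta>" unfolding tangle_rank_def by (simp only: if_False)
  thus ?thesis using ind unfolding tangle_indep_def by simp
qed

lemma T3: "Z \<subseteq> W \<Longrightarrow> W \<subseteq> E \<Longrightarrow> lamM W < int (card Z) \<Longrightarrow> E - W \<in> T"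
proof -
  assume a: "Z \<subseteq> W" "W \<subseteq> E" "lamM W < int (card Z)"
  have c: "conn_fun E r W < card Z" using conn_lamM[OF a(2)] a(3) by simp
  have "W \<notin> T"
  proof
    assume "W \<in> T"
    hence "card Z \<le> conn_fun E r W" using T_indep a(1) by simp
    thus False using c by simp
  qed
  thus ?thesis using T_or[of W] c Z_le_theta a by auto
qed

lemma T3b: "Z \<subseteq> W \<Longrightarrow> W \<subseteq> P \<union> Q \<Longrightarrow> P \<subseteq> E \<Longrightarrow> Q \<subseteq> E \<Longrightarrow> card P < \<theta> \<Longrightarrow> card Q < \<theta> \<Longrightarrow> W \<subseteq> E \<Longrightarrow> lamM W \<ge> int (card Z)"
proof (rule ccontr)
  assume a: "Z \<subseteq> W" "W \<subseteq> P \<union> Q" "P \<subseteq> E" "Q \<subseteq> E" "card P < \<theta>" "card Q < \<theta>" "W \<subseteq> E" "\<not> lamM W \<ge> int (card Z)"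
  hence "E - W \<in> T" using T3 by auto
  moreover have "P \<in> T" "Q \<in> T" using T_small a by auto
  ultimately show False using T_cover[of P Q "E - W"] a by auto
qed

end

context stp begin

lemma lamM_empty: "lamM {} = 0" unfolding lam_def by (simp add: r_empty)

lemma c1: "lamM Z \<ge> int (card Z)"
proof -
  consider "card Z = 0" | "card Z = 1" | "card Z \<ge> 2" by linarith
  then show ?thesis
  proof cases
    case 1 then show ?thesis using lamM_empty finZ by simp
  next
    case 2
    then obtain z where z: "Z = {z}" using card_1_singletonE by blast
    show ?thesis
    proof (rule ccontr)
      assume "\<not> ?thesis"
      hence "E - Z \<in> T" using T3[of Z] ZE by auto
      thus False using T_nosing[of z] z ZE by auto
    qed
  next
    case 3
    hence "Z \<noteq> {}" by auto
    then obtain z where z: "z \<in> Z" by blast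
    have "card (Z - {z}) < \<theta>" using Z_le_theta z finZ 3 by (simp add: card_Diff_singleton)
    moreover have "card {z} < \<theta>" using Z_le_theta 3 by simp
    ultimately show ?thesis using T3b[of Z "Z - {z}" "{z}"] ZE z by auto
  qed
qed

lemma lamM_Z: "lamM Z = int (r Z) + int (r F) - int (r E)"
  using lamM_eq by simp

lemma rZ: "r Z = card Z" and rF: "r F = r E"
proof -
  have "r Z \<le> card Z" using rle ZE by simp
  moreover have "r F \<le> r E" using mono[of F E] by auto
  ultimately show "r Z = card Z" "r F = r E" using c1 lamM_Z by linarith+
qed

lemma indep: "Y \<subseteq> Z \<Longrightarrow> r Y = card Y"
proof -
  assume a: "Y \<subseteq> Z"
  have "Y \<union> (Z - Y) = Z" using a by auto
  hence "r Z \<le> r Y + card (Z - Y)" using r_union_card[of Y "Z - Y"] a ZE by auto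
  moreover have "card Z = card Y + card (Z - Y)" using a finZ
    by (metis card_Diff_subset finite_subset le_add_diff_inverse card_mono)
  moreover have "r Y \<le> card Y" using rle a ZE by auto
  ultimately show ?thesis using rZ by linarith
qed

lemma span: "F \<subseteq> Y \<Longrightarrow> Y \<subseteq> E \<Longrightarrow> r Y = r E"
  using mono[of F Y] mono[of Y E] rF by auto

lemma FZ: "card Z \<le> card F"
proof -
  have "r Z \<le> r E" using mono ZE by auto
  moreover have "r F \<le> card F" using rle by auto
  ultimately show ?thesis using rZ rF by simp
qed

lemma c2: "card Z \<ge> 3 \<Longrightarrow> x \<in> F \<Longrightarrow> lamM (insert x Z) \<ge> int (card Z)"
proof -
  assume a: "card Z \<ge> 3" "x \<in> F"
  have "Z \<noteq> {}" using a by auto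
  then obtain z where z: "z \<in> Z" by blast
  have "card (Z - {z}) < \<theta>" using Z_le_theta z finZ a by (simp add: card_Diff_singleton)
  moreover have "card {z, x} \<le> 2" by (cases "z = x") auto
  hence "card {z, x} < \<theta>" using Z_le_theta a by linarith
  ultimately show ?thesis using T3b[of "insert x Z" "Z - {z}" "{z,x}"] ZE z a by auto
qed

lemma F4: "card Z \<ge> 3 \<Longrightarrow> card F \<ge> 4"
proof (rule ccontr)
  assume a: "card Z \<ge> 3" "\<not> card F \<ge> 4"
  have "Z \<noteq> {}" using a by auto
  then obtain z where z: "z \<in> Z" by blast
  have th: "\<theta> \<ge> 3" using Z_le_theta a by simp
  have "card (Z - {z}) < \<theta>" using Z_le_theta z finZ a by (simp add: card_Diff_singleton)
  hence P: "Z - {z} \<in> T" using T_small[of "Z - {z}"] ZE by auto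
  show False
  proof (cases "F = {}")
    case True
    have "{z} \<in> T" using T_small[of "{z}"] th z ZE by auto
    moreover have "(Z - {z}) \<union> {z} \<union> {z} = E" using True z ZE by auto
    ultimately show False using T_cover P by metis
  next
    case False
    then obtain f where f: "f \<in> F" by blast
    have "card {z, f} \<le> 2" by (cases "z = f") auto
    hence Q: "{z, f} \<in> T" using T_small[of "{z,f}"] th z f ZE by auto
    have "card (F - {f}) \<le> 2" using a f finF by (simp add: card_Diff_singleton)
    hence R: "F - {f} \<in> T" using T_small[of "F - {f}"] th by auto
    have "(Z - {z}) \<union> {z, f} \<union> (F - {f}) = E" using z f ZE by auto
    thus False using T_cover P Q R by metis
  qed
qed

lemma lamN_eq: "X \<subseteq> F \<Longrightarrow> lam E r C D X = int (r (X \<union> C)) + int (r (E - D - X)) - int (card C) - int (r E)"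
  unfolding lam_def using indep[of C] span[of "E - D"] by auto

lemma N_iff: "minor_3conn E r C D \<longleftrightarrow> (\<forall>X. X \<subseteq> F \<longrightarrow>
     (card X \<ge> 1 \<and> card (F - X) \<ge> 1 \<longrightarrow> lam E r C D X \<ge> 1) \<and>
     (card X \<ge> 2 \<and> card (F - X) \<ge> 2 \<longrightarrow> lam E r C D X \<ge> 2))"
  using m3_iff[OF CE DE CD] by simp

lemma n12: "x \<in> F \<Longrightarrow> card F \<ge> 2 \<Longrightarrow> r (insert x C) = card C + 1 \<and> r (E - D - {x}) = r E"
proof -
  assume a: "x \<in> F" "card F \<ge> 2"
  have "card (F - {x}) \<ge> 1" using a finF by (simp add: card_Diff_singleton)
  hence "lam E r C D {x} \<ge> 1" using N3 N_iff a by auto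
  hence "int (r (insert x C)) + int (r (E - D - {x})) - int (card C) - int (r E) \<ge> 1"
    using lamN_eq[of "{x}"] a by simp
  moreover have "r (insert x C) \<le> r C + 1" using r_insert[of C x] CE a by auto
  moreover have "r (E - D - {x}) \<le> r E" using mono[of "E - D - {x}" E] by auto
  ultimately show ?thesis using indep[of C] by simp
qed

lemma n3: "x \<in> F \<Longrightarrow> y \<in> F \<Longrightarrow> x \<noteq> y \<Longrightarrow> card F \<ge> 4 \<Longrightarrow>
   int (r (C \<union> {x, y})) + int (r (E - D - {x, y})) \<ge> int (card C) + int (r E) + 2"
proof -
  assume a: "x \<in> F" "y \<in> F" "x \<noteq> y" "card F \<ge> 4"
  have "card (F - {x, y}) \<ge> 2" using a finF by (simp add: card_Diff_subset)
  moreover have "card {x, y} = 2" using a by simp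
  ultimately have "lam E r C D {x, y} \<ge> 2" using N3 N_iff a by auto
  moreover have "{x, y} \<union> C = C \<union> {x, y}" by auto
  ultimately show ?thesis using lamN_eq[of "{x,y}"] a by simp
qed

lemma lamT_eq: "S \<subseteq> Z \<Longrightarrow> X \<subseteq> F \<union> S \<Longrightarrow>
   lamT S X = int (r (X \<union> (C - S))) + int (r (E - (D - S) - X)) - int (card (C - S)) - int (r E)"
proof -
  assume a: "S \<subseteq> Z" "X \<subseteq> F \<union> S"
  have "r (C - S) = card (C - S)" using indep[of "C - S"] by auto
  moreover have "r (E - (D - S)) = r E" using span[of "E - (D - S)"] by auto
  ultimately show ?thesis unfolding lam_def by simp
qed

end

context stp begin

lemma m3T: "S \<subseteq> Z \<Longrightarrow> minor_3conn E r (C - S) (D - S) \<longleftrightarrow> (\<forall>X. X \<subseteq> F \<union> S \<longrightarrow>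
     (card X \<ge> 1 \<and> card (F \<union> S - X) \<ge> 1 \<longrightarrow> lamT S X \<ge> 1) \<and>
     (card X \<ge> 2 \<and> card (F \<union> S - X) \<ge> 2 \<longrightarrow> lamT S X \<ge> 2))"
  using m3_iff[of "C - S" "D - S"] CE DE CD ground_eq[of S] by auto

lemma lamT_compl: "S \<subseteq> Z \<Longrightarrow> X \<subseteq> F \<union> S \<Longrightarrow> lamT S (F \<union> S - X) = lamT S X"
proof -
  assume a: "S \<subseteq> Z" "X \<subseteq> F \<union> S"
  have g: "E - ((C - S) \<union> (D - S)) = F \<union> S" using ground_eq a by simp
  have "lam E r (C - S) (D - S) (E - ((C - S) \<union> (D - S)) - X) = lamT S X"
    using lam_compl[of "C - S" "D - S" X] CE DE CD g a by auto
  thus ?thesis by (simp only: g)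
qed

lemma lamT_Z: "lamT Z X = lamM X"
proof -
  have e: "C - Z = {}" "D - Z = {}" by auto
  show ?thesis by (simp only: e)
qed

lemma card_split: "S \<subseteq> Z \<Longrightarrow> X \<subseteq> F \<union> S \<Longrightarrow> card X = card (X \<inter> F) + card (X \<inter> S)"
proof -
  assume a: "S \<subseteq> Z" "X \<subseteq> F \<union> S"
  have "X = (X \<inter> F) \<union> (X \<inter> S)" "(X \<inter> F) \<inter> (X \<inter> S) = {}" using a by auto
  moreover have "finite S" using finZ a finite_subset by auto
  hence "finite (X \<inter> F)" "finite (X \<inter> S)" using finF by auto
  ultimately show ?thesis by (metis card_Un_disjoint)
qed

lemma G2: "S \<subseteq> Z \<Longrightarrow> minor_3conn E r (C - S) (D - S) \<Longrightarrow> s \<in> S \<Longrightarrow> x \<in> F \<Longrightarrow> card F + card S \<ge> 4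
  \<Longrightarrow> lamT S {s, x} \<ge> 2"
proof -
  assume a: "S \<subseteq> Z" "minor_3conn E r (C - S) (D - S)" "s \<in> S" "x \<in> F" "card F + card S \<ge> 4"
  have sx: "s \<noteq> x" using a by auto
  have fs: "finite (F \<union> S)" using finF finZ a finite_subset by auto
  have "card (F \<union> S) = card F + card S" using a finF finZ finite_subset
    by (metis Diff_disjoint card_Un_disjoint disjoint_iff subsetD)
  moreover have "card (F \<union> S - {s, x}) = card (F \<union> S) - 2" using a sx fs by (simp add: card_Diff_subset)
  ultimately have "card (F \<union> S - {s, x}) \<ge> 2" using a by simp
  moreover have "card {s, x} = 2" using sx by simp
  ultimately show ?thesis using m3T[of S] a by auto
qed

lemma addZ: "U \<subseteq> Z \<Longrightarrow> Y \<subseteq> E \<Longrightarrow> Y \<inter> U = {} \<Longrightarrow> lamM (Y \<union> U) \<le> lamM Y + int (card U)"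
proof -
  assume a: "U \<subseteq> Z" "Y \<subseteq> E" "Y \<inter> U = {}"
  have e: "F \<union> Z = E" using ZE by auto
  have 1: "lamT Z (Y \<union> U) \<le> lamT (Z - U) ((Y \<union> U) - U) + int (card U)"
    using mono_set[of Z U "Y \<union> U"] a e by auto
  have 2: "lamT (Z - U) (Y - U) \<le> lamT Z Y" using mono_set[of Z U Y] a e by auto
  have "(Y \<union> U) - U = Y" "Y - U = Y" using a by auto
  thus ?thesis using 1 2 lamT_Z by simp
qed

lemma backZ: "S \<subseteq> Z \<Longrightarrow> X \<subseteq> F \<union> S \<Longrightarrow> lamM (X \<union> (Z - S)) \<le> lamT S X + int (card (Z - S))"
proof -
  assume a: "S \<subseteq> Z" "X \<subseteq> F \<union> S"
  have "lamT Z (X \<union> (Z - S)) \<le> lamT (Z - (Z - S)) ((X \<union> (Z - S)) - (Z - S)) + int (card (Z - S))"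
    using mono_set[of Z "Z - S" "X \<union> (Z - S)"] a ZE by auto
  moreover have "Z - (Z - S) = S" "(X \<union> (Z - S)) - (Z - S) = X" using a by auto
  ultimately show ?thesis using lamT_Z by simp
qed

lemma toN: "S \<subseteq> Z \<Longrightarrow> X \<subseteq> F \<union> S \<Longrightarrow> lam E r C D (X \<inter> F) \<le> lamT S X"
proof -
  assume a: "S \<subseteq> Z" "X \<subseteq> F \<union> S"
  have "lamT (S - S) (X - S) \<le> lamT S X" using mono_set[of S S X] a by auto
  moreover have "X - S = X \<inter> F" using a by auto
  ultimately show ?thesis by simp
qed

lemma KL:
  assumes S: "S \<subseteq> Z" "S \<noteq> Z" and X: "X \<subseteq> F \<union> S" and c: "card (X \<inter> F) \<le> 1"
  shows "int (card (X \<inter> S)) \<le> lamT S X \<or> (X \<inter> F \<noteq> {} \<and> card (X \<inter> S) \<le> 1)"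
proof -
  let ?W = "Z \<union> (X \<inter> F)"
  have W: "?W = (X \<union> (Z - S)) \<union> (S - X)" using S X by auto
  have b1: "lamM ?W \<le> lamM (X \<union> (Z - S)) + int (card (S - X))"
    unfolding W using addZ[of "S - X" "X \<union> (Z - S)"] S X ZE by auto
  have b2: "lamM (X \<union> (Z - S)) \<le> lamT S X + int (card (Z - S))" using backZ S X by auto
  have fS: "finite S" using S finZ finite_subset by auto
  have k1: "card Z = card (Z - S) + card S" using S finZ
    by (metis card_Diff_subset finite_subset le_add_diff_inverse2 card_mono)
  have "S = (S - X) \<union> (X \<inter> S)" "(S - X) \<inter> (X \<inter> S) = {}" by auto
  hence k2: "card S = card (S - X) + card (X \<inter> S)" using fS by (metis card_Un_disjoint finite_Diff finite_Int)
  have bound: "lamM ?W \<le> lamT S X + int (card Z) - int (card (X \<inter> S))" using b1 b2 k1 k2 by simp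
  show ?thesis
  proof (cases "X \<inter> F = {}")
    case True
    hence "?W = Z" by simp
    thus ?thesis using c1 bound by simp
  next
    case False
    then obtain x where x: "X \<inter> F = {x}" using c
      by (metis card_0_eq card_1_singletonE finF finite_Int le_neq_implies_less less_one)
    show ?thesis
    proof (cases "card Z \<ge> 3")
      case True
      have "?W = insert x Z" using x by auto
      hence "lamM ?W \<ge> int (card Z)" using c2[of x] True x by auto
      thus ?thesis using bound by simp
    next
      case False
      have "card S < card Z" using S finZ by (simp add: psubset_card_mono)
      hence "card (X \<inter> S) \<le> 1" using False card_mono[OF fS, of "X \<inter> S"] by simp
      thus ?thesis using x by simp
    qed
  qed
qed

lemma M_iff: "minor_3conn E r {} {}"
proof -
  have "minor_rank r {} = r" unfolding minor_rank_def by (auto simp: r_empty)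
  thus ?thesis unfolding minor_3conn_def minor_ground_def using conn3 by simp
qed

lemma G1:
  assumes S: "S \<subseteq> Z" and H: "\<forall>s\<in>S. \<forall>x\<in>F. lamT S {s, x} \<ge> 2"
  shows "minor_3conn E r (C - S) (D - S)"
proof (cases "S = Z")
  case True
  hence e: "C - S = {}" "D - S = {}" by auto
  show ?thesis using M_iff by (simp only: e)
next
  case SZ: False
  have fS: "finite S" using S finZ finite_subset by auto
  have sub: "card Y \<le> 1 \<and> (Y \<inter> F = {} \<longrightarrow> int (card Y) \<le> lamT S Y)"
    if Y: "Y \<subseteq> F \<union> S" "card (Y \<inter> F) \<le> 1" "lamT S Y \<le> 1" for Y
  proof -
    have cs: "card Y = card (Y \<inter> F) + card (Y \<inter> S)" using card_split S Y by auto
    have kl: "int (card (Y \<inter> S)) \<le> lamT S Y \<or> (Y \<inter> F \<noteq> {} \<and> card (Y \<inter> S) \<le> 1)"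
      using KL[OF S SZ Y(1) Y(2)] .
    have s1: "card (Y \<inter> S) \<le> 1" using kl Y(3) by linarith
    have "card Y \<le> 1"
    proof (rule ccontr)
      assume "\<not> card Y \<le> 1"
      hence "card (Y \<inter> F) = 1" "card (Y \<inter> S) = 1" using cs s1 Y(2) by linarith+
      then obtain x s where x: "Y \<inter> F = {x}" and s: "Y \<inter> S = {s}" by (meson card_1_singletonE)
      have "Y = {s, x}" using x s Y(1) by auto
      moreover have "lamT S {s, x} \<ge> 2" using H x s by auto
      ultimately show False using Y(3) by simp
    qed
    moreover have "Y \<inter> F = {} \<longrightarrow> int (card Y) \<le> lamT S Y" using kl cs by auto
    ultimately show ?thesis by simp
  qed
  have "\<forall>X. X \<subseteq> F \<union> S \<longrightarrow>
     (card X \<ge> 1 \<and> card (F \<union> S - X) \<ge> 1 \<longrightarrow> lamT S X \<ge> 1) \<and>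
     (card X \<ge> 2 \<and> card (F \<union> S - X) \<ge> 2 \<longrightarrow> lamT S X \<ge> 2)"
  proof (intro allI impI conjI)
    fix X assume X: "X \<subseteq> F \<union> S"
    have cX: "F \<union> S - X \<subseteq> F \<union> S" "(F \<union> S - X) \<inter> F = F - X" "F - (X \<inter> F) = F - X" by auto
    have lc: "lamT S (F \<union> S - X) = lamT S X" using lamT_compl S X by auto
    have nX: "lam E r C D (X \<inter> F) \<le> lamT S X" using toN S X by auto
    have XF: "X \<inter> F \<subseteq> F" by auto
    have nn: "(card (X \<inter> F) \<ge> 1 \<and> card (F - (X \<inter> F)) \<ge> 1 \<longrightarrow> lam E r C D (X \<inter> F) \<ge> 1) \<and>
     (card (X \<inter> F) \<ge> 2 \<and> card (F - (X \<inter> F)) \<ge> 2 \<longrightarrow> lam E r C D (X \<inter> F) \<ge> 2)"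
      using N3[unfolded N_iff] XF by blast
    {
      assume a: "card X \<ge> 1 \<and> card (F \<union> S - X) \<ge> 1"
      show "lamT S X \<ge> 1"
      proof (rule ccontr)
        assume l: "\<not> lamT S X \<ge> 1"
        have "\<not> (card (X \<inter> F) \<ge> 1 \<and> card (F - (X \<inter> F)) \<ge> 1)"
          using nn nX l by linarith
        hence "X \<inter> F = {} \<or> F - X = {}" using finF cX
          by (metis One_nat_def Suc_leI card_gt_0_iff finite_Diff finite_Int)
        then show False
        proof
          assume "X \<inter> F = {}"
          hence "card X \<le> 1 \<and> int (card X) \<le> lamT S X" using sub[OF X] l by simp
          thus False using a l by linarith
        next
          assume e: "F - X = {}"
          hence "card (F \<union> S - X) \<le> 1 \<and> int (card (F \<union> S - X)) \<le> lamT S (F \<union> S - X)"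
            using sub[OF cX(1)] l lc cX(2) e by simp
          thus False using a l lc by linarith
        qed
      qed
    }
    {
      assume a: "card X \<ge> 2 \<and> card (F \<union> S - X) \<ge> 2"
      show "lamT S X \<ge> 2"
      proof (rule ccontr)
        assume l: "\<not> lamT S X \<ge> 2"
        have "\<not> (card (X \<inter> F) \<ge> 2 \<and> card (F - (X \<inter> F)) \<ge> 2)"
          using nn nX l by linarith
        hence "card (X \<inter> F) \<le> 1 \<or> card (F - (X \<inter> F)) \<le> 1" by linarith
        hence "card (X \<inter> F) \<le> 1 \<or> card (F - X) \<le> 1" by (simp only: cX(3))
        then show False
        proof
          assume "card (X \<inter> F) \<le> 1"
          hence "card X \<le> 1" using sub[OF X] l by simp
          thus False using a by linarith
        next
          assume e: "card (F - X) \<le> 1"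
          hence "card (F \<union> S - X) \<le> 1" using sub[OF cX(1)] l lc cX(2) by simp
          thus False using a by linarith
        qed
      qed
    }
  qed
  thus ?thesis using m3T S by simp
qed

end

context stp begin

lemma mono_sub: "T' \<subseteq> S \<Longrightarrow> S \<subseteq> Z \<Longrightarrow> X \<subseteq> F \<union> T' \<Longrightarrow> lamT T' X \<le> lamT S X"
proof -
  assume a: "T' \<subseteq> S" "S \<subseteq> Z" "X \<subseteq> F \<union> T'"
  have "lamT (S - (S - T')) (X - (S - T')) \<le> lamT S X" using mono_set[of S "S - T'" X] a by auto
  moreover have "S - (S - T') = T'" "X - (S - T') = X" using a by auto
  ultimately show ?thesis by simp
qed

lemma cardCD: "card Z = card C + card D"
  using CD finZ by (simp add: card_Un_disjoint)

lemma adj_CD: "v \<in> C \<Longrightarrow> u \<in> D \<Longrightarrow> minor_3conn E r (C - {v, u}) (D - {v, u}) \<Longrightarrow> restoration_adj E r C D v u"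
proof -
  assume a: "v \<in> C" "u \<in> D" "minor_3conn E r (C - {v, u}) (D - {v, u})"
  have "C - {v, u} = C - {v}" "D - {v, u} = D - {u}" using a CD by auto
  thus ?thesis using a unfolding restoration_adj_def by simp
qed

lemma adj_DC: "v \<in> D \<Longrightarrow> u \<in> C \<Longrightarrow> minor_3conn E r (C - {v, u}) (D - {v, u}) \<Longrightarrow> restoration_adj E r C D v u"
proof -
  assume a: "v \<in> D" "u \<in> C" "minor_3conn E r (C - {v, u}) (D - {v, u})"
  have "C - {v, u} = C - {u}" "D - {v, u} = D - {v}" using a CD by auto
  thus ?thesis using a unfolding restoration_adj_def by simp
qed

lemma adj_K: "restoration_adj E r C D v u \<Longrightarrow> minor_3conn E r (C - {v, u}) (D - {v, u}) \<and> v \<noteq> u \<and> v \<in> Z \<and> u \<in> Z"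
proof -
  assume a: "restoration_adj E r C D v u"
  show ?thesis
  proof (cases "v \<in> C \<and> u \<in> D \<and> minor_3conn E r (C - {v}) (D - {u})")
    case True
    have "C - {v, u} = C - {v}" "D - {v, u} = D - {u}" using True CD by auto
    thus ?thesis using True CD by auto
  next
    case False
    hence b: "u \<in> C \<and> v \<in> D \<and> minor_3conn E r (C - {u}) (D - {v})" using a unfolding restoration_adj_def by blast
    have "C - {v, u} = C - {u}" "D - {v, u} = D - {v}" using b CD by auto
    thus ?thesis using b CD by auto
  qed
qed

lemma BW:
  assumes S: "S \<subseteq> Z" and H: "no_isolated_nonpriv E r C D S"
  shows "minor_3conn E r (C - S) (D - S)"
proof -
  have fS: "finite S" using S finZ finite_subset by auto
  have c: "card S = 0 \<or> card S = 1 \<or> card S \<ge> 2" by linarith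
  have "S = {} \<or> S = Z \<or> card S = 1 \<or> (card S \<ge> 2 \<and> S \<noteq> Z)" using fS c by auto
  then consider "S = {}" | "S = Z" | s where "S = {s}" | "card S \<ge> 2" "S \<noteq> Z"
    by (metis card_1_singletonE)
  then show ?thesis
  proof cases
    case 1 then show ?thesis using N3 by simp
  next
    case 2
    hence e: "C - S = {}" "D - S = {}" by auto
    show ?thesis using M_iff by (simp only: e)
  next
    case 3
    have "privileged E r C D s"
    proof (rule ccontr)
      assume "\<not> privileged E r C D s"
      then obtain u where "u \<in> S" "restoration_adj E r C D s u" using H 3 unfolding no_isolated_nonpriv_def by blast
      thus False using adj_K 3 by auto
    qed
    thus ?thesis using 3 unfolding privileged_def by simp
  next
    case 4
    have "card S < card Z" using S 4 finZ by (simp add: psubset_card_mono)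
    hence Z3: "card Z \<ge> 3" using 4 by simp
    hence F4: "card F \<ge> 4" using F4 by simp
    have "\<forall>s\<in>S. \<forall>x\<in>F. lamT S {s, x} \<ge> 2"
    proof (intro ballI)
      fix s x assume s: "s \<in> S" and x: "x \<in> F"
      show "lamT S {s, x} \<ge> 2"
      proof (cases "privileged E r C D s")
        case True
        hence "minor_3conn E r (C - {s}) (D - {s})" unfolding privileged_def by simp
        hence "lamT {s} {s, x} \<ge> 2" using G2[of "{s}" s x] s x S F4 by auto
        moreover have "lamT {s} {s, x} \<le> lamT S {s, x}" using mono_sub[of "{s}" S "{s,x}"] s x S by auto
        ultimately show ?thesis by simp
      next
        case False
        then obtain u where u: "u \<in> S" "restoration_adj E r C D s u" using H s unfolding no_isolated_nonpriv_def by blast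
        hence K: "minor_3conn E r (C - {s, u}) (D - {s, u})" using adj_K by blast
        have "lamT {s, u} {s, x} \<ge> 2" using G2[of "{s, u}" s x] K s u x S F4 by auto
        moreover have "lamT {s, u} {s, x} \<le> lamT S {s, x}" using mono_sub[of "{s,u}" S "{s,x}"] s u x S by auto
        ultimately show ?thesis by simp
      qed
    qed
    thus ?thesis using G1 S by simp
  qed
qed

end

context stp begin

lemma lamT_eq': "S \<subseteq> Z \<Longrightarrow> X \<subseteq> F \<union> S \<Longrightarrow> X \<union> (C - S) = P \<Longrightarrow> E - (D - S) - X = Q \<Longrightarrow> card (C - S) = k
   \<Longrightarrow> lamT S X = int (r P) + int (r Q) - int k - int (r E)"
  using lamT_eq by simp

lemma FW_C:
  assumes S: "S \<subseteq> Z" and v: "v \<in> S" "v \<in> C" and x0: "x0 \<in> F" and l0: "lamT {v} {v, x0} < 2"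
    and F2: "card F \<ge> 2" and G2S: "\<forall>x\<in>F. lamT S {v, x} \<ge> 2"
  shows "\<exists>u\<in>S. restoration_adj E r C D v u"
proof -
  have vD: "v \<notin> D" using v CD by auto
  have x0C: "x0 \<notin> C" "x0 \<notin> D" "x0 \<in> E" "x0 \<noteq> v" using x0 v by auto
  have cC: "card (C - {v}) = card C - 1" "card C \<ge> 1" using v finZ
    by (auto simp: card_Diff_singleton card_gt_0_iff intro: Suc_leI)
  have cC3: "int (card C - 1) = int (card C) - 1" using cC by auto
  define H where "H = E - D - {v, x0}"
  have HE: "H \<subseteq> E" unfolding H_def by auto
  have n0: "r (insert x0 C) = card C + 1" "r (E - D - {x0}) = r E" using n12 x0 F2 by auto
  have L0: "lamT {v} {v, x0} = int (r (insert x0 C)) + int (r H) - int (card C - 1) - int (r E)"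
    by (rule lamT_eq') (use v x0C CD S CE DE in \<open>auto simp: H_def cC\<close>)
  have rH1: "int (r H) \<le> int (r E) - 1" using L0 l0 n0 cC3 by linarith
  have "insert v H = E - D - {x0}" unfolding H_def using v vD CE x0C by auto
  hence "r (E - D - {x0}) \<le> r H + 1" using r_insert[of H v] HE v CE by auto
  hence rH: "int (r H) = int (r E) - 1" using rH1 n0 by linarith
  have "\<exists>u\<in>S \<inter> D. r (insert u H) \<noteq> r H"
  proof (rule ccontr)
    assume "\<not> ?thesis"
    hence cl: "r (H \<union> (S \<inter> D)) = r H" using cl_union[of "S \<inter> D" H] HE DE by auto
    have "r ((C - S) \<union> {v, x0}) \<le> r (C - S) + card {v, x0}" using r_union_card[of "C - S" "{v,x0}"] CE v x0C by auto
    moreover have "r (C - S) = card (C - S)" using indep by auto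
    moreover have "card {v, x0} = 2" using x0C by auto
    ultimately have a: "r ({v, x0} \<union> (C - S)) \<le> card (C - S) + 2" by (simp add: Un_commute)
    have "lamT S {v, x0} = int (r ({v, x0} \<union> (C - S))) + int (r (H \<union> (S \<inter> D))) - int (card (C - S)) - int (r E)"
      by (rule lamT_eq') (use v x0C CD S CE DE in \<open>auto simp: H_def\<close>)
    hence "lamT S {v, x0} \<le> 1" using a cl rH by linarith
    thus False using G2S x0 by force
  qed
  then obtain u where u: "u \<in> S" "u \<in> D" "r (insert u H) \<noteq> r H" by blast
  have uE: "u \<in> E" "u \<notin> C" "u \<noteq> v" using u DE CD v by auto
  have ru: "r (insert u H) = r H + 1" using u r_insert[of H u] mono[of H "insert u H"] HE uE by force
  have Kvu: "minor_3conn E r (C - {v, u}) (D - {v, u})"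
  proof (cases "{v, u} = Z")
    case True
    hence e: "C - {v, u} = {}" "D - {v, u} = {}" by auto
    show ?thesis using M_iff by (simp only: e)
  next
    case False
    have "{v, u} \<subset> Z" using v u False by auto
    hence "card {v, u} < card Z" using finZ by (rule psubset_card_mono[rotated])
    hence Z3: "card Z \<ge> 3" using uE by simp
    hence F4: "card F \<ge> 4" using F4 by simp
    have TZ: "{v, u} \<subseteq> Z" using v u by auto
    have eC: "C - {v, u} = C - {v}" "D - {v, u} = D - {u}" using uE vD by auto
    have "\<forall>s\<in>{v, u}. \<forall>x\<in>F. lamT {v, u} {s, x} \<ge> 2"
    proof (intro ballI)
      fix s x assume s: "s \<in> {v, u}" and x: "x \<in> F"
      have xE: "x \<in> E" "x \<notin> C" "x \<notin> D" "x \<noteq> v" "x \<noteq> u" using x v u by auto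
      have nx: "r (insert x C) = card C + 1" "r (E - D - {x}) = r E" using n12 x F2 by auto
      show "lamT {v, u} {s, x} \<ge> 2"
      proof (cases "s = v")
        case True
        define Hx where "Hx = E - D - {v, x}"
        have HxE: "Hx \<subseteq> E" unfolding Hx_def by auto
        have L: "lamT {v, u} {v, x} = int (r (insert x C)) + int (r (insert u Hx)) - int (card C - 1) - int (r E)"
          by (rule lamT_eq') (use v xE uE TZ CD CE DE in \<open>auto simp: Hx_def eC cC\<close>)
        show ?thesis
        proof (rule ccontr)
          assume "\<not> ?thesis"
          hence "\<not> lamT {v, u} {v, x} \<ge> 2" using True by simp
          hence a: "int (r (insert u Hx)) \<le> int (r E) - 1" using L nx cC3 by linarith
          show False
          proof (cases "x = x0")
            case True
            hence "Hx = H" unfolding Hx_def H_def by simp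
            thus False using a ru rH by simp
          next
            case False
            have "r Hx \<le> r (insert u Hx)" using mono[of Hx "insert u Hx"] HxE uE by auto
            hence aa: "int (r Hx) \<le> int (r E) - 1" using a by linarith
            have "r (H \<union> Hx) + r (H \<inter> Hx) \<le> r H + r Hx" using sub HE HxE by auto
            moreover have "H \<union> Hx = E - D - {v}" unfolding H_def Hx_def using False by auto
            moreover have "r (E - D - {v}) = r E" using span[of "E - D - {v}"] v by auto
            ultimately have b: "int (r (H \<inter> Hx)) \<le> int (r E) - 2" using rH aa by simp
            have "E - D - {x, x0} = insert v (H \<inter> Hx)" unfolding H_def Hx_def using v vD CE xE x0C by auto
            hence "r (E - D - {x, x0}) \<le> r (H \<inter> Hx) + 1" using r_insert[of "H \<inter> Hx" v] HE v CE by auto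
            moreover have "r (C \<union> {x, x0}) \<le> r C + card {x, x0}" using r_union_card[of C "{x,x0}"] CE xE x0C by auto
            moreover have "r C = card C" using indep by auto
            moreover have "card {x, x0} = 2" using False by auto
            ultimately show False using n3[of x x0] x x0 False F4 b by linarith
          qed
        qed
      next
        case False
        hence su: "s = u" using s by simp
        define Y where "Y = insert x (C - {v})"
        have YE: "Y \<subseteq> E" unfolding Y_def using xE CE by auto
        have L: "lamT {v, u} {u, x} = int (r (insert u Y)) + int (r (E - D - {x})) - int (card C - 1) - int (r E)"
          by (rule lamT_eq') (use v xE uE TZ CD CE DE in \<open>auto simp: Y_def eC cC\<close>)
        show ?thesis
        proof (rule ccontr)
          assume "\<not> ?thesis"
          hence "\<not> lamT {v, u} {u, x} \<ge> 2" using su by simp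
          hence a: "r (insert u Y) \<le> card C" using L nx cC3 by linarith
          have "r Y \<le> r (C - {v}) + card {x}" unfolding Y_def using r_union_card[of "C - {v}" "{x}"] CE xE by auto
          moreover have "r (C - {v}) = card (C - {v})" using indep by auto
          ultimately have y1: "r Y \<le> card C" using cC by simp
          have "insert v Y = insert x C" unfolding Y_def using v by auto
          hence "r (insert x C) \<le> r Y + 1" using r_insert[of Y v] YE v CE by auto
          hence y2: "r Y = card C" using y1 nx by simp
          have "r Y \<le> r (insert u Y)" by (rule mono) (use YE uE in auto)
          hence cly: "r (insert u Y) = r Y" using a y2 by simp
          have "x \<noteq> x0 \<or> x = x0" by blast
          then show False
          proof
            assume False: "x \<noteq> x0"
            have "Y \<subseteq> H" unfolding Y_def H_def using xE False CE CD x0C by auto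
            hence "r (insert u H) = r H" using cl_mono[of Y H u] cly HE uE by auto
            thus False using ru by simp
          next
            assume True: "x = x0"
            have "insert x0 Z = insert u Y \<union> insert v (D - {u})" unfolding Y_def using True v u by auto
            hence "r (insert x0 Z) \<le> r (insert u Y) + card (insert v (D - {u}))"
              using r_union_card[of "insert u Y" "insert v (D - {u})"] YE uE v CE DE by auto
            moreover have "card (insert v (D - {u})) = card D" using vD u finZ
              by (simp add: card_Diff_singleton) (metis One_nat_def Suc_pred card_gt_0_iff empty_iff finite_Un)
            ultimately have "r (insert x0 Z) \<le> card Z" using a cardCD by simp
            moreover have "lamM (insert x0 Z) \<ge> int (card Z)" using c2 Z3 x0 by auto
            moreover have "lamM (insert x0 Z) = int (r (insert x0 Z)) + int (r (E - insert x0 Z)) - int (r E)"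
              using lamM_eq by simp
            moreover have "E - insert x0 Z \<subseteq> H" unfolding H_def using v by auto
            hence "r (E - insert x0 Z) \<le> r H" using mono[of "E - insert x0 Z" H] HE by auto
            ultimately show False using rH by linarith
          qed
        qed
      qed
    qed
    hence "minor_3conn E r (C - {v, u}) (D - {v, u})" using G1[of "{v, u}"] TZ by simp
    thus ?thesis .
  qed
  thus ?thesis using adj_CD[OF v(2) u(2)] u by blast
qed


lemma IL:
  assumes v: "v \<in> D" and x0: "x0 \<in> F" and S: "S \<subseteq> Z"
    and base: "r (insert v (insert x0 C)) \<le> card C + 1"
    and all: "\<forall>u\<in>S \<inter> C. r (insert v (insert x0 (C - {u}))) \<le> card C"
    and W: "W \<subseteq> S \<inter> C"
  shows "r (insert v (insert x0 (C - W))) \<le> card (C - W) + 1"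
proof -
  have fW: "finite W" using W finZ finite_subset by auto
  have vE: "v \<in> E" "x0 \<in> E" using v x0 DE by auto
  have vnC: "v \<notin> C" using v CD by auto
  have fC: "finite C" using finZ by auto
  have indvC: "r (insert v C) = card C + 1" using indep[of "insert v C"] v vnC fC by auto
  show ?thesis using fW W
  proof (induction W)
    case empty then show ?case using base by simp
  next
    case (insert u W)
    let ?P = "insert v (insert x0 (C - W))" and ?Q = "insert v (insert x0 (C - {u}))"
    have PE: "?P \<subseteq> E" "?Q \<subseteq> E" using vE CE by auto
    have IH: "r ?P \<le> card (C - W) + 1" using insert by auto
    have uC: "u \<in> C" "u \<in> S" using insert by auto
    have Q: "r ?Q \<le> card C" using all uC by auto
    have un: "?P \<union> ?Q = insert v (insert x0 C)" using insert by auto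
    have it: "?P \<inter> ?Q = insert v (insert x0 (C - insert u W))" using v x0 CD by auto
    have "r (?P \<union> ?Q) + r (?P \<inter> ?Q) \<le> r ?P + r ?Q" by (rule sub) (use PE in auto)
    moreover have "r (insert v C) \<le> r (?P \<union> ?Q)" unfolding un by (rule mono) (use vE CE in auto)
    ultimately have "r (?P \<inter> ?Q) \<le> card (C - W)" using IH Q indvC by linarith
    moreover have "card (C - W) = card (C - insert u W) + 1" using uC insert finZ
      by (metis Diff_insert Suc_eq_plus1 card_Diff1_less_iff card_Suc_Diff1 finite_Diff finite_Un Diff_iff insert_Diff_single)
    ultimately show ?case using it by simp
  qed
qed

lemma FW_D:
  assumes S: "S \<subseteq> Z" and v: "v \<in> S" "v \<in> D" and x0: "x0 \<in> F" and l0: "lamT {v} {v, x0} < 2"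
    and F2: "card F \<ge> 2" and G2S: "\<forall>x\<in>F. lamT S {v, x} \<ge> 2"
  shows "\<exists>u\<in>S. restoration_adj E r C D v u"
proof -
  have vC: "v \<notin> C" "v \<in> E" using v CD DE by auto
  have x0C: "x0 \<notin> C" "x0 \<notin> D" "x0 \<in> E" "x0 \<noteq> v" using x0 v by auto
  have n0: "r (insert x0 C) = card C + 1" "r (E - D - {x0}) = r E" using n12 x0 F2 by auto
  define P0 where "P0 = insert v (insert x0 C)"
  have P0E: "P0 \<subseteq> E" unfolding P0_def using CE vC x0C by auto
  have L0: "lamT {v} {v, x0} = int (r P0) + int (r (E - D - {x0})) - int (card C) - int (r E)"
    by (rule lamT_eq') (use v x0C vC CD S CE DE in \<open>auto simp: P0_def\<close>)
  have rP0: "r P0 \<le> card C + 1" using L0 l0 n0 by linarith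
  have fC: "finite C" using finZ by auto
  have indvC: "r (insert v C) = card C + 1" using indep[of "insert v C"] v vC fC by auto
  have "\<exists>u\<in>S \<inter> C. r (insert v (insert x0 (C - {u}))) > card C"
  proof (rule ccontr)
    assume "\<not> ?thesis"
    hence all: "\<forall>u\<in>S \<inter> C. r (insert v (insert x0 (C - {u}))) \<le> card C" by (simp add: not_less)
    have "r (insert v (insert x0 (C - (S \<inter> C)))) \<le> card (C - (S \<inter> C)) + 1"
      using IL[OF v(2) x0 S _ all] rP0 unfolding P0_def by auto
    moreover have "C - (S \<inter> C) = C - S" by auto
    ultimately have a: "r (insert v (insert x0 (C - S))) \<le> card (C - S) + 1" by simp
    have "lamT S {v, x0} = int (r (insert v (insert x0 (C - S)))) + int (r (E - (D - S) - {v, x0})) - int (card (C - S)) - int (r E)"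
      by (rule lamT_eq') (use v x0C S CE DE in auto)
    moreover have "r (E - (D - S) - {v, x0}) \<le> r E" by (rule mono) auto
    ultimately have "lamT S {v, x0} \<le> 1" using a by linarith
    thus False using G2S x0 by force
  qed
  then obtain u where u: "u \<in> S" "u \<in> C" and ru: "r (insert v (insert x0 (C - {u}))) \<ge> card C + 1" by auto
  have uE: "u \<in> E" "u \<notin> D" "u \<noteq> v" using u CE CD vC by auto
  have cC: "card (C - {u}) = card C - 1" "card C \<ge> 1" using u finZ
    by (auto simp: card_Diff_singleton card_gt_0_iff intro: Suc_leI)
  have cC3: "int (card C - 1) = int (card C) - 1" using cC by auto
  have Kvu: "minor_3conn E r (C - {v, u}) (D - {v, u})"
  proof (cases "{v, u} = Z")
    case True
    hence e: "C - {v, u} = {}" "D - {v, u} = {}" by auto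
    show ?thesis using M_iff by (simp only: e)
  next
    case False
    have "{v, u} \<subset> Z" using v u False by auto
    hence "card {v, u} < card Z" using finZ by (rule psubset_card_mono[rotated])
    hence Z3: "card Z \<ge> 3" using uE by simp
    hence F4: "card F \<ge> 4" using F4 by simp
    have TZ: "{v, u} \<subseteq> Z" using v u by auto
    have eC: "C - {v, u} = C - {u}" "D - {v, u} = D - {v}" using uE vC by auto
    have "\<forall>s\<in>{v, u}. \<forall>x\<in>F. lamT {v, u} {s, x} \<ge> 2"
    proof (intro ballI)
      fix s x assume s: "s \<in> {v, u}" and x: "x \<in> F"
      have xE: "x \<in> E" "x \<notin> C" "x \<notin> D" "x \<noteq> v" "x \<noteq> u" using x v u by auto
      have nx: "r (insert x C) = card C + 1" "r (E - D - {x}) = r E" using n12 x F2 by auto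
      have "s = v \<or> s = u" using s by auto
      then show "lamT {v, u} {s, x} \<ge> 2"
      proof
        assume sv: "s = v"
        have L: "lamT {v, u} {v, x} = int (r (insert v (insert x (C - {u})))) + int (r (E - D - {x})) - int (card C - 1) - int (r E)"
          by (rule lamT_eq') (use v xE uE vC TZ CD CE DE in \<open>auto simp: eC cC\<close>)
        show ?thesis
        proof (rule ccontr)
          assume "\<not> ?thesis"
          hence "\<not> lamT {v, u} {v, x} \<ge> 2" using sv by simp
          hence a: "r (insert v (insert x (C - {u}))) \<le> card C" using L nx cC3 by linarith
          have "x \<noteq> x0 \<or> x = x0" by blast
          then show False
          proof
            assume xx: "x = x0"
            thus False using a ru by simp
          next
            assume xx: "x \<noteq> x0"
            define Px where "Px = insert v (insert x C)"
            have PxE: "Px \<subseteq> E" unfolding Px_def using vC xE CE by auto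
            have "Px = insert u (insert v (insert x (C - {u})))" unfolding Px_def using u by auto
            hence "r Px \<le> r (insert v (insert x (C - {u}))) + 1"
              using r_insert[of "insert v (insert x (C - {u}))" u] uE vC xE CE by auto
            hence rPx: "r Px \<le> card C + 1" using a by simp
            have "r (Px \<union> P0) + r (Px \<inter> P0) \<le> r Px + r P0" by (rule sub) (use PxE P0E in auto)
            moreover have "Px \<inter> P0 = insert v C" unfolding Px_def P0_def using xx xE x0C by auto
            hence "r (Px \<inter> P0) = card C + 1" using indvC by simp
            moreover have "r (C \<union> {x, x0}) \<le> r (Px \<union> P0)" by (rule mono) (use PxE P0E in \<open>auto simp: Px_def P0_def\<close>)
            ultimately have "r (C \<union> {x, x0}) \<le> card C + 1" using rPx rP0 indvC by linarith
            moreover have "r (E - D - {x, x0}) \<le> r E" by (rule mono) auto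
            ultimately show False using n3[of x x0] x x0 xx F4 by linarith
          qed
        qed
      next
        assume su: "s = u"
        define J where "J = E - (D - {v}) - {u, x}"
        have JE: "J \<subseteq> E" unfolding J_def by auto
        have L: "lamT {v, u} {u, x} = int (r (insert x C)) + int (r J) - int (card C - 1) - int (r E)"
          by (rule lamT_eq') (use v xE uE vC u TZ CD CE DE in \<open>auto simp: eC cC J_def\<close>)
        show ?thesis
        proof (rule ccontr)
          assume "\<not> ?thesis"
          hence "\<not> lamT {v, u} {u, x} \<ge> 2" using su by simp
          hence a: "int (r J) \<le> int (r E) - 1" using L nx cC3 by linarith
          have "x \<noteq> x0 \<or> x = x0" by blast
          then show False
          proof
            assume xx: "x \<noteq> x0"
            define Y where "Y = insert v (insert x0 (C - {u}))"
            have "Y \<subseteq> J" unfolding Y_def J_def using vC x0C xx uE xE CE CD v u by auto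
            moreover have "insert u Y = P0" unfolding Y_def P0_def using u by auto
            moreover have "r Y \<le> r (insert u Y)" by (rule mono) (use vC x0C CE uE in \<open>auto simp: Y_def\<close>)
            ultimately have cl: "r (insert u Y) = r Y" using ru rP0 unfolding Y_def by simp
            have "r (insert u J) = r J" using cl_mono[of Y J u] cl JE uE \<open>Y \<subseteq> J\<close> by auto
            moreover have "r (E - D - {x}) \<le> r (insert u J)" by (rule mono) (use uE in \<open>auto simp: J_def\<close>)
            ultimately show False using a nx by linarith
          next
            assume xx: "x = x0"
            have "insert x0 Z = P0 \<union> (D - {v})" unfolding P0_def using v by auto
            hence "r (insert x0 Z) \<le> r P0 + card (D - {v})"
              using r_union_card[of P0 "D - {v}"] P0E DE by auto
            moreover have "card (D - {v}) = card D - 1" "card D \<ge> 1" using v finZ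
              by (auto simp: card_Diff_singleton card_gt_0_iff intro: Suc_leI)
            ultimately have "r (insert x0 Z) \<le> card Z" using rP0 cardCD by simp
            moreover have "lamM (insert x0 Z) \<ge> int (card Z)" using c2 Z3 x0 by auto
            moreover have "lamM (insert x0 Z) = int (r (insert x0 Z)) + int (r (E - insert x0 Z)) - int (r E)"
              using lamM_eq by simp
            moreover have "r (E - insert x0 Z) \<le> r J" by (rule mono) (use xx JE u in \<open>auto simp: J_def\<close>)
            ultimately show False using a by linarith
          qed
        qed
      qed
    qed
    hence "minor_3conn E r (C - {v, u}) (D - {v, u})" using G1[of "{v, u}"] TZ by simp
    thus ?thesis .
  qed
  thus ?thesis using adj_DC[OF v(2) u(2)] u by blast
qed

end

context stp begin

lemma FW:
  assumes S: "S \<subseteq> Z" and K: "minor_3conn E r (C - S) (D - S)"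
  shows "no_isolated_nonpriv E r C D S"
  unfolding no_isolated_nonpriv_def
proof (intro ballI impI)
  fix v assume v: "v \<in> S" and np: "\<not> privileged E r C D v"
  have vZ: "v \<in> Z" using v S by auto
  have Kv: "\<not> minor_3conn E r (C - {v}) (D - {v})" using np vZ unfolding privileged_def by blast
  have "S \<noteq> {v}" using K Kv by auto
  then obtain w where w: "w \<in> S" "w \<noteq> v" using v by blast
  have fS: "finite S" using S finZ finite_subset by auto
  have "{v, w} \<subseteq> S" using v w by auto
  hence "card {v, w} \<le> card S" using fS by (rule card_mono[rotated])
  hence S2: "card S \<ge> 2" using w by simp
  have "card S \<le> card Z" using S finZ by (simp add: card_mono)
  hence F2: "card F \<ge> 2" using S2 FZ by simp
  have "{v} \<subseteq> Z" using vZ by auto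
  hence "\<not> (\<forall>s\<in>{v}. \<forall>x\<in>F. lamT {v} {s, x} \<ge> 2)" using G1[of "{v}"] Kv by blast
  then obtain x0 where x0: "x0 \<in> F" "lamT {v} {v, x0} < 2" by force
  have G2S: "\<forall>x\<in>F. lamT S {v, x} \<ge> 2" using G2[of S v] S K v F2 S2 by auto
  show "\<exists>u\<in>S. restoration_adj E r C D v u"
  proof (cases "v \<in> C")
    case True
    show ?thesis using FW_C[OF S v True x0 F2 G2S] .
  next
    case False
    hence "v \<in> D" using vZ by auto
    show ?thesis using FW_D[OF S v \<open>v \<in> D\<close> x0 F2 G2S] .
  qed
qed

lemma main: "S \<subseteq> Z \<Longrightarrow> minor_3conn E r (C - S) (D - S) \<longleftrightarrow> no_isolated_nonpriv E r C D S"
  using FW BW by blast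

end

theorem lemma4p5:
  fixes E :: "'a set" and r :: "'a set \<Rightarrow> nat" and \<theta> :: nat and T :: "'a set set"
    and C D S :: "'a set"
  assumes "matroid_rank E r"
    and "three_connected E r"
    and "is_tangle E r \<theta> T"
    and "C \<subseteq> E" and "D \<subseteq> E" and "C \<inter> D = {}"
    and "tangle_indep E r \<theta> T (C \<union> D)"
    and "minor_3conn E r C D"
    and "S \<subseteq> C \<union> D"
  shows "minor_3conn E r (C - S) (D - S) \<longleftrightarrow> no_isolated_nonpriv E r C D S"
proof -
  interpret stp E r \<theta> T C D
    using assms by (unfold_locales) auto
  show ?thesis using main assms(9) by simp
qed


end
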